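(* Let $\rho=\rho_0$ and let $R=\sum_{m,n\ge 0}\frac1{n!}\binom{\psi}{m}\phi^n\otimes(a-1)^mb^n$. Then $\rho^{\otimes2}(R)$ is a well-defined element of $\operatorname{End}(A^1)^{\otimes 2}[[\hbar]]$, and the operator $r:=\rho^{\otimes2}(R)P$, where $P$ exchanges the two arguments of a function of $(z_0,z_1)$, acts on $A^2[[\hbar]]$ by $$(rf)(z_0,z_1)=f\Big(z_1+\frac{\hbar}{1+\hbar}z_0,\ \frac{1}{1+\hbar}z_0\Big)=f(U^{\top}z),\qquad U=\begin{pmatrix}1-t&t\\1&0\end{pmatrix},\ t=\frac1{1+\hbar}.$$ In particular, for the coherent states $\varphi_v(z)=e^{v^\top z}$ ($v\in\mathbb{C}^2$) one has $r\varphi_v=\varphi_{Uv}$.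
   Context: $\rho_0\colon D(\mathsf{B}_1)\to\operatorname{End}(A^1[[\hbar]])$ is given by $a\mapsto 1+\hbar$, $b\mapsto\partial/\partial z$, $\phi\mapsto\hbar z$, $\psi\mapsto -z\,\partial/\partial z$, $\chi_{u,v}f(z)=e^{\hbar uz}f(vz)$. $A^n$ denotes the span of functions $\mathbb{C}^n\to\mathbb{C}$ of the form $p(z)e^{u^\top z}$ with $p$ a polynomial and $u\in\mathbb{C}^n$; elements of $\mathbb{C}^n$ are column vectors. The binomial $\binom{\psi}{m}=\psi(\psi-1)\cdots(\psi-m+1)/m!$. *)

theory Defs
  imports "HOL-Analysis.Analysis" "HOL-Library.Numeral_Type"
begin

text \<open>Points of C^2 are column vectors z = (z_0, z_1) :: complex^2 (indices 0, 1 :: 2).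
  An element of A^2[[hbar]] is represented by its sequence of hbar-coefficients.\<close>

type_synonym hser = "nat \<Rightarrow> (complex^2 \<Rightarrow> complex)"

definition bil :: "complex^2 \<Rightarrow> complex^2 \<Rightarrow> complex" where
  "bil u z = u$0 * z$0 + u$1 * z$1"

definition A2 :: "(complex^2 \<Rightarrow> complex) set" where
  "A2 = {f. \<exists>(S::nat set) c k0 k1 (u::nat \<Rightarrow> complex^2). finite S \<and>
            f = (\<lambda>z. \<Sum>i\<in>S. c i * (z$0) ^ k0 i * (z$1) ^ k1 i * exp (bil (u i) z))}"

definition A2ser :: "hser set" where
  "A2ser = {F. \<forall>j. F j \<in> A2}"

definition partial :: "2 \<Rightarrow> (complex^2 \<Rightarrow> complex) \<Rightarrow> complex^2 \<Rightarrow> complex" where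
  "partial i g z = deriv (\<lambda>w. g (\<chi> k. if k = i then w else z$k)) (z$i)"

text \<open>rho_0 on generators, acting in tensor slot i (on the variable z_i), hbar-linearly.\<close>
definition rho_a :: "2 \<Rightarrow> hser \<Rightarrow> hser" where   (* a |-> 1 + hbar *)
  "rho_a i F = (\<lambda>N z. F N z + (if N = 0 then 0 else F (N - 1) z))"

definition rho_b :: "2 \<Rightarrow> hser \<Rightarrow> hser" where
  "rho_b i F = (\<lambda>N. partial i (F N))"

definition rho_phi :: "2 \<Rightarrow> hser \<Rightarrow> hser" where (* phi |-> hbar z *)
  "rho_phi i F = (\<lambda>N z. if N = 0 then 0 else z$i * F (N - 1) z)"

definition rho_psi :: "2 \<Rightarrow> hser \<Rightarrow> hser" where
  "rho_psi i F = (\<lambda>N z. - (z$i) * partial i (F N) z)"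

fun ffact_op :: "(hser \<Rightarrow> hser) \<Rightarrow> nat \<Rightarrow> hser \<Rightarrow> hser" where
  "ffact_op T 0 F = F"
| "ffact_op T (Suc k) F = (\<lambda>N z. T (ffact_op T k F) N z - of_nat k * ffact_op T k F N z)"

definition binom_op :: "(hser \<Rightarrow> hser) \<Rightarrow> nat \<Rightarrow> hser \<Rightarrow> hser" where
  "binom_op T m F = (\<lambda>N z. ffact_op T m F N z / fact m)"

definition am1 :: "2 \<Rightarrow> hser \<Rightarrow> hser" where
  "am1 i F = (\<lambda>N z. rho_a i F N z - F N z)"

text \<open>rho^{(x)2} of the (m,n)-term (1/n!) binom(psi,m) phi^n (x) (a-1)^m b^n of R:
  first tensor factor acts on z_0, second on z_1.\<close>
definition R_term :: "nat \<Rightarrow> nat \<Rightarrow> hser \<Rightarrow> hser" where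
  "R_term m n F = (\<lambda>N z. binom_op (rho_psi 0) m
      ((rho_phi 0 ^^ n) ((am1 1 ^^ m) ((rho_b 1 ^^ n) F))) N z / fact n)"

definition rho2R :: "hser \<Rightarrow> hser" where
  "rho2R F = (\<lambda>N z. infsum (\<lambda>p. R_term (fst p) (snd p) F N z) UNIV)"

definition swapP :: "hser \<Rightarrow> hser" where
  "swapP F = (\<lambda>N z. F N (\<chi> i. if i = 0 then z$1 else z$0))"

definition r_op :: "hser \<Rightarrow> hser" where
  "r_op F = rho2R (swapP F)"

definition Umat :: "complex \<Rightarrow> complex^2^2" where
  "Umat h = (let t = 1 / (1 + h) in
     (\<chi> i j. if i = 0 then (if j = 0 then 1 - t else t) else (if j = 0 then 1 else 0)))"

text \<open>N-th Taylor coefficient at h = 0 (the hbar-expansion).\<close>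
definition hcoeff :: "(complex \<Rightarrow> complex) \<Rightarrow> nat \<Rightarrow> complex" where
  "hcoeff g N = (deriv ^^ N) g 0 / fact N"

text \<open>The hbar-series of f(U^T z) for f in A^2[[hbar]].\<close>
definition substU :: "hser \<Rightarrow> hser" where
  "substU F = (\<lambda>N z. \<Sum>j\<le>N. hcoeff (\<lambda>h. F j (transpose (Umat h) *v z)) (N - j))"

definition coh :: "complex^2 \<Rightarrow> complex^2 \<Rightarrow> complex" where
  "coh v = (\<lambda>z. exp (bil v z))"

definition cohU :: "complex^2 \<Rightarrow> hser" where
  "cohU v = (\<lambda>N z. hcoeff (\<lambda>h. coh (Umat h *v v) z) N)"

end

theory Submission imports Defs "HOL-Complex_Analysis.Cauchy_Integral_Formula" begin

definition tm :: "complex \<Rightarrow> nat \<Rightarrow> nat \<Rightarrow> complex^2 \<Rightarrow> complex^2 \<Rightarrow> complex" where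
  "tm c a b u = (\<lambda>z. c * (z$0) ^ a * (z$1) ^ b * exp (bil u z))"

lemma A2_alt: "A2 = {f. \<exists>(S::nat set) c k0 k1 u. finite S \<and>
            f = (\<lambda>z. \<Sum>i\<in>S. tm (c i) (k0 i) (k1 i) (u i) z)}"
  unfolding A2_def tm_def by simp

lemma A2I: "finite S \<Longrightarrow> f = (\<lambda>z. \<Sum>i\<in>(S::nat set). tm (c i) (k0 i) (k1 i) (u i) z) \<Longrightarrow> f \<in> A2"
  unfolding A2_alt by (intro CollectI exI conjI)

lemma A2E:
  assumes "f \<in> A2"
  obtains S c k0 k1 u where "finite (S::nat set)" "f = (\<lambda>z. \<Sum>i\<in>S. tm (c i) (k0 i) (k1 i) (u i) z)"
proof -
  from assms have "\<exists>(S::nat set) c k0 k1 u. finite S \<and>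
            f = (\<lambda>z. \<Sum>i\<in>S. tm (c i) (k0 i) (k1 i) (u i) z)" unfolding A2_alt by simp
  then show ?thesis by (elim exE conjE) (metis that)
qed

lemma A2_zero: "(\<lambda>z. 0) \<in> A2"
  by (rule A2I[of "{}"]) simp_all

lemma A2_tm: "tm c a b u \<in> A2"
  by (rule A2I[of "{0}" _ "\<lambda>_. c" "\<lambda>_. a" "\<lambda>_. b" "\<lambda>_. u"]) simp_all

lemma A2_cmult: assumes "f \<in> A2" shows "(\<lambda>z. a * f z) \<in> A2"
proof -
  from assms obtain S c k0 k1 u where S: "finite (S::nat set)" and f: "f = (\<lambda>z. \<Sum>i\<in>S. tm (c i) (k0 i) (k1 i) (u i) z)"
    by (rule A2E)
  show ?thesis
    by (rule A2I[OF S, of _ "\<lambda>i. a * c i" k0 k1 u]) (simp add: f tm_def sum_distrib_left mult.assoc)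
qed

lemma A2_add: assumes "f \<in> A2" "g \<in> A2" shows "(\<lambda>z. f z + g z) \<in> A2"
proof -
  from assms(1) obtain S c k0 k1 u where S: "finite (S::nat set)" and f: "f = (\<lambda>z. \<Sum>i\<in>S. tm (c i) (k0 i) (k1 i) (u i) z)"
    by (rule A2E)
  from assms(2) obtain S' c' k0' k1' u' where S': "finite (S'::nat set)" and g: "g = (\<lambda>z. \<Sum>i\<in>S'. tm (c' i) (k0' i) (k1' i) (u' i) z)"
    by (rule A2E)
  define T where "T = (\<lambda>i::nat. 2*i) ` S \<union> (\<lambda>i. 2*i+1) ` S'"
  define C where "C = (\<lambda>i::nat. if even i then c (i div 2) else c' (i div 2))"
  define K0 where "K0 = (\<lambda>i::nat. if even i then k0 (i div 2) else k0' (i div 2))"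
  define K1 where "K1 = (\<lambda>i::nat. if even i then k1 (i div 2) else k1' (i div 2))"
  define U where "U = (\<lambda>i::nat. if even i then u (i div 2) else u' (i div 2))"
  have disj: "(\<lambda>i::nat. 2*i) ` S \<inter> (\<lambda>i. 2*i+1) ` S' = {}" by (auto simp: image_iff) presburger
  have "(\<lambda>z. f z + g z) = (\<lambda>z. \<Sum>i\<in>T. tm (C i) (K0 i) (K1 i) (U i) z)"
  proof
    fix z
    have "(\<Sum>i\<in>T. tm (C i) (K0 i) (K1 i) (U i) z) =
       (\<Sum>i\<in>(\<lambda>i::nat. 2*i) ` S. tm (C i) (K0 i) (K1 i) (U i) z) +
       (\<Sum>i\<in>(\<lambda>i. 2*i+1) ` S'. tm (C i) (K0 i) (K1 i) (U i) z)"
      unfolding T_def using S S' disj by (intro sum.union_disjoint) auto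
    also have "\<dots> = f z + g z"
    proof -
      have 1: "(\<Sum>i\<in>(\<lambda>i::nat. 2*i) ` S. tm (C i) (K0 i) (K1 i) (U i) z) = f z"
        by (subst sum.reindex) (auto simp: inj_on_def f C_def K0_def K1_def U_def)
      have 2: "(\<Sum>i\<in>(\<lambda>i::nat. 2*i+1) ` S'. tm (C i) (K0 i) (K1 i) (U i) z) = g z"
        by (subst sum.reindex) (auto simp: inj_on_def g C_def K0_def K1_def U_def)
      show ?thesis using 1 2 by simp
    qed
    finally show "f z + g z = (\<Sum>i\<in>T. tm (C i) (K0 i) (K1 i) (U i) z)" by simp
  qed
  moreover have "finite T" using S S' unfolding T_def by auto
  ultimately show ?thesis by (intro A2I) 
qed

lemma A2_lin: "f \<in> A2 \<Longrightarrow> g \<in> A2 \<Longrightarrow> (\<lambda>z. a * f z + b * g z) \<in> A2"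
  using A2_add A2_cmult by blast

lemma A2_diff: "f \<in> A2 \<Longrightarrow> g \<in> A2 \<Longrightarrow> (\<lambda>z. f z - b * g z) \<in> A2"
  using A2_lin[of f g 1 "-b"] by simp

lemma A2_induct[consumes 1, case_names zero tm add]:
  assumes "f \<in> A2" "P (\<lambda>z. 0)" "\<And>c a b u. P (tm c a b u)"
    "\<And>f g. f \<in> A2 \<Longrightarrow> g \<in> A2 \<Longrightarrow> P f \<Longrightarrow> P g \<Longrightarrow> P (\<lambda>z. f z + g z)"
  shows "P f"
proof -
  from assms(1) obtain S c k0 k1 u where S: "finite (S::nat set)" and f: "f = (\<lambda>z. \<Sum>i\<in>S. tm (c i) (k0 i) (k1 i) (u i) z)"
    by (rule A2E)
  have "P (\<lambda>z. \<Sum>i\<in>S. tm (c i) (k0 i) (k1 i) (u i) z) \<and> (\<lambda>z. \<Sum>i\<in>S. tm (c i) (k0 i) (k1 i) (u i) z) \<in> A2"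
    using S
  proof (induction S rule: finite_induct)
    case empty thus ?case using assms(2) A2_zero by simp
  next
    case (insert x F)
    have e: "(\<lambda>z. \<Sum>i\<in>insert x F. tm (c i) (k0 i) (k1 i) (u i) z)
        = (\<lambda>z. tm (c x) (k0 x) (k1 x) (u x) z + (\<Sum>i\<in>F. tm (c i) (k0 i) (k1 i) (u i) z))"
      using insert by simp
    have "P (\<lambda>z. tm (c x) (k0 x) (k1 x) (u x) z + (\<Sum>i\<in>F. tm (c i) (k0 i) (k1 i) (u i) z))"
      using insert.IH A2_tm assms(3) by (intro assms(4)) auto
    moreover have "(\<lambda>z. tm (c x) (k0 x) (k1 x) (u x) z + (\<Sum>i\<in>F. tm (c i) (k0 i) (k1 i) (u i) z)) \<in> A2"
      using insert.IH A2_tm by (intro A2_add) auto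
    ultimately show ?case unfolding e by simp
  qed
  thus ?thesis using f by simp
qed


lemma two_cases: "(i::2) = 0 \<or> i = 1"
  using exhaust_2[of i] by auto

lemma zero_neq_one_2: "(0::2) \<noteq> 1" by simp

lemma tm_slice0: "tm c a b u (\<chi> k. if k = 0 then x else w$k) = c * x^a * (w$1)^b * exp (u$0 * x + u$1 * w$1)"
  by (simp add: tm_def bil_def)

lemma tm_slice1: "tm c a b u (\<chi> k. if k = 1 then x else w$k) = c * (w$0)^a * x^b * exp (u$0 * w$0 + u$1 * x)"
  by (simp add: tm_def bil_def)

lemma tm_slice_diff: "(\<lambda>x. tm c a b u (\<chi> k. if k = i then x else w$k)) field_differentiable (at y)"
proof -
  have "i = 0 \<or> i = 1" by (rule two_cases)
  thus ?thesis
  proof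
    assume i: "i = 0"
    show ?thesis unfolding i tm_slice0 
      by (rule holomorphic_on_imp_differentiable_at[of _ UNIV]) (auto intro!: holomorphic_intros)
  next
    assume i: "i = 1"
    show ?thesis unfolding i tm_slice1 
      by (rule holomorphic_on_imp_differentiable_at[of _ UNIV]) (auto intro!: holomorphic_intros)
  qed
qed

lemma A2_slice_diff: "f \<in> A2 \<Longrightarrow> (\<lambda>x. f (\<chi> k. if k = i then x else w$k)) field_differentiable (at y)"
proof (induction f rule: A2_induct)
  case zero thus ?case by simp
next
  case (tm c a b u) thus ?case by (rule tm_slice_diff)
next
  case (add f g) thus ?case by (intro field_differentiable_add)
qed

lemma partial_lin: "f \<in> A2 \<Longrightarrow> g \<in> A2 \<Longrightarrow>
   partial i (\<lambda>z. a * f z + b * g z) = (\<lambda>z. a * partial i f z + b * partial i g z)"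
  unfolding partial_def
  by (rule ext, subst deriv_add) (auto intro!: field_differentiable_mult A2_slice_diff A2_cmult simp: deriv_cmult A2_slice_diff)

lemma partial_add: "f \<in> A2 \<Longrightarrow> g \<in> A2 \<Longrightarrow>
   partial i (\<lambda>z. f z + g z) = (\<lambda>z. partial i f z + partial i g z)"
  using partial_lin[of f g i 1 1] by simp

lemma partial_zero: "partial i (\<lambda>z. 0) = (\<lambda>z. 0)"
  unfolding partial_def by simp

lemma partial_tm0: "partial 0 (tm c a b u) = (\<lambda>w. tm (c * of_nat a) (a - 1) b u w + tm (c * u$0) a b u w)"
proof
  fix w :: "complex^2"
  have "((\<lambda>x. c * x^a * (w$1)^b * exp (u$0 * x + u$1 * w$1)) has_field_derivative
     (tm (c * of_nat a) (a - 1) b u w + tm (c * u$0) a b u w)) (at (w$0))"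
    unfolding tm_def bil_def
    by (rule derivative_eq_intros refl | simp)+
  thus "partial 0 (tm c a b u) w = tm (c * of_nat a) (a - 1) b u w + tm (c * u$0) a b u w"
    unfolding partial_def tm_slice0 by (rule DERIV_imp_deriv)
qed

lemma partial_tm1: "partial 1 (tm c a b u) = (\<lambda>w. tm (c * of_nat b) a (b - 1) u w + tm (c * u$1) a b u w)"
proof
  fix w :: "complex^2"
  have "((\<lambda>x. c * (w$0)^a * x^b * exp (u$0 * w$0 + u$1 * x)) has_field_derivative
     (tm (c * of_nat b) a (b - 1) u w + tm (c * u$1) a b u w)) (at (w$1))"
    unfolding tm_def bil_def
    by (rule derivative_eq_intros refl | simp)+
  thus "partial 1 (tm c a b u) w = tm (c * of_nat b) a (b - 1) u w + tm (c * u$1) a b u w"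
    unfolding partial_def tm_slice1 by (rule DERIV_imp_deriv)
qed


definition lin :: "((complex^2 \<Rightarrow> complex) \<Rightarrow> (complex^2 \<Rightarrow> complex)) \<Rightarrow> bool" where
  "lin T \<longleftrightarrow> (\<forall>f\<in>A2. T f \<in> A2) \<and>
     (\<forall>f\<in>A2. \<forall>g\<in>A2. \<forall>a b. T (\<lambda>z. a * f z + b * g z) = (\<lambda>z. a * T f z + b * T g z))"

lemma linI:
  assumes "\<And>f g a b. f \<in> A2 \<Longrightarrow> g \<in> A2 \<Longrightarrow> T (\<lambda>z. a * f z + b * g z) = (\<lambda>z. a * T f z + b * T g z)"
    "\<And>c a b u. T (tm c a b u) \<in> A2"
  shows "lin T"
proof -
  have z: "T (\<lambda>z. 0) = (\<lambda>z. 0)" using assms(1)[OF A2_zero A2_zero, of 0 0] by simp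
  have "f \<in> A2 \<Longrightarrow> T f \<in> A2" for f
  proof (induction f rule: A2_induct)
    case zero thus ?case using z A2_zero by simp
  next
    case (tm c a b u) thus ?case by (rule assms(2))
  next
    case (add f g) thus ?case using assms(1)[of f g 1 1] A2_add by simp
  qed
  thus ?thesis unfolding lin_def using assms(1) by blast
qed

lemma lin_A2: "lin T \<Longrightarrow> f \<in> A2 \<Longrightarrow> T f \<in> A2" unfolding lin_def by blast
lemma lin_lin: "lin T \<Longrightarrow> f \<in> A2 \<Longrightarrow> g \<in> A2 \<Longrightarrow> T (\<lambda>z. a * f z + b * g z) = (\<lambda>z. a * T f z + b * T g z)"
  unfolding lin_def by blast
lemma lin_add: "lin T \<Longrightarrow> f \<in> A2 \<Longrightarrow> g \<in> A2 \<Longrightarrow> T (\<lambda>z. f z + g z) = (\<lambda>z. T f z + T g z)"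
  using lin_lin[of T f g 1 1] by simp
lemma lin_diff: "lin T \<Longrightarrow> f \<in> A2 \<Longrightarrow> g \<in> A2 \<Longrightarrow> T (\<lambda>z. f z - c * g z) = (\<lambda>z. T f z - c * T g z)"
  using lin_lin[of T f g 1 "-c"] by simp
lemma lin_cmult: "lin T \<Longrightarrow> f \<in> A2 \<Longrightarrow> T (\<lambda>z. c * f z) = (\<lambda>z. c * T f z)"
  using lin_lin[of T f f c 0] by simp
lemma lin_zero: "lin T \<Longrightarrow> T (\<lambda>z. 0) = (\<lambda>z. 0)"
  using lin_lin[of T "\<lambda>z. 0" "\<lambda>z. 0" 0 0] A2_zero by simp

lemma lin_partial0: "lin (partial 0)"
  by (rule linI, rule partial_lin, assumption+) (simp add: partial_tm0 A2_add A2_tm)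
lemma lin_partial1: "lin (partial 1)"
  by (rule linI, rule partial_lin, assumption+) (simp add: partial_tm1 A2_add A2_tm)

lemma A2_mz: "f \<in> A2 \<Longrightarrow> (\<lambda>z. c * z$0 * f z) \<in> A2"
proof (induction f rule: A2_induct)
  case zero thus ?case using A2_zero by simp
next
  case (tm c' a b u)
  have "(\<lambda>z. c * z$0 * tm c' a b u z) = tm (c * c') (Suc a) b u" by (auto simp: tm_def)
  thus ?case using A2_tm by simp
next
  case (add f g)
  have "(\<lambda>z. c * z$0 * (f z + g z)) = (\<lambda>z. c * z$0 * f z + c * z$0 * g z)" by (simp add: algebra_simps)
  thus ?case using add A2_add by simp
qed

definition Pop :: "(complex^2 \<Rightarrow> complex) \<Rightarrow> (complex^2 \<Rightarrow> complex)" where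
  "Pop f = (\<lambda>z. - (z$0) * partial 0 f z)"
definition Xop :: "(complex^2 \<Rightarrow> complex) \<Rightarrow> (complex^2 \<Rightarrow> complex)" where
  "Xop f = (\<lambda>z. z$0 * partial 1 f z)"
definition Dop :: "(complex^2 \<Rightarrow> complex) \<Rightarrow> (complex^2 \<Rightarrow> complex)" where
  "Dop f = (\<lambda>z. Pop f z + Xop f z)"

lemma lin_Pop: "lin Pop"
proof (rule linI)
  fix f g a b assume "f \<in> A2" "g \<in> A2"
  thus "Pop (\<lambda>z. a * f z + b * g z) = (\<lambda>z. a * Pop f z + b * Pop g z)"
    unfolding Pop_def by (simp add: lin_lin[OF lin_partial0] algebra_simps)
next
  fix c a b u show "Pop (tm c a b u) \<in> A2"
    unfolding Pop_def using A2_mz[OF lin_A2[OF lin_partial0 A2_tm], of "-1" c a b u] by simp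
qed

lemma lin_Xop: "lin Xop"
proof (rule linI)
  fix f g a b assume "f \<in> A2" "g \<in> A2"
  thus "Xop (\<lambda>z. a * f z + b * g z) = (\<lambda>z. a * Xop f z + b * Xop g z)"
    unfolding Xop_def by (simp add: lin_lin[OF lin_partial1] algebra_simps)
next
  fix c a b u show "Xop (tm c a b u) \<in> A2"
    unfolding Xop_def using A2_mz[OF lin_A2[OF lin_partial1 A2_tm], of "1" c a b u] by simp
qed

lemma lin_Dop: "lin Dop"
proof (rule linI)
  fix f g a b assume "f \<in> A2" "g \<in> A2"
  thus "Dop (\<lambda>z. a * f z + b * g z) = (\<lambda>z. a * Dop f z + b * Dop g z)"
    unfolding Dop_def by (simp add: lin_lin[OF lin_Pop] lin_lin[OF lin_Xop] algebra_simps)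
next
  fix c a b u show "Dop (tm c a b u) \<in> A2"
    unfolding Dop_def using A2_add[OF lin_A2[OF lin_Pop A2_tm] lin_A2[OF lin_Xop A2_tm]] by simp
qed

lemma Pop_tm: "Pop (tm c a b u) = (\<lambda>w. tm (- (c * of_nat a)) a b u w + tm (- (c * u$0)) (Suc a) b u w)"
  unfolding Pop_def partial_tm0
  by (rule ext, cases a) (simp_all add: tm_def algebra_simps)

lemma Xop_tm: "Xop (tm c a b u) = (\<lambda>w. tm (c * of_nat b) (Suc a) (b - 1) u w + tm (c * u$1) (Suc a) b u w)"
  unfolding Xop_def partial_tm1
  by (rule ext) (simp add: tm_def algebra_simps)

lemma XP_comm: "f \<in> A2 \<Longrightarrow> Xop (Pop f) = (\<lambda>z. Pop (Xop f) z + Xop f z)"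
proof (induction f rule: A2_induct)
  case zero thus ?case by (simp add: lin_zero[OF lin_Pop] lin_zero[OF lin_Xop])
next
  case (tm c a b u)
  show ?case
    unfolding Pop_tm Xop_tm lin_add[OF lin_Xop A2_tm A2_tm] lin_add[OF lin_Pop A2_tm A2_tm]
    by (rule ext) (simp add: Pop_tm Xop_tm tm_def algebra_simps)
next
  case (add f g)
  have pf: "Pop f \<in> A2" "Pop g \<in> A2" "Xop f \<in> A2" "Xop g \<in> A2"
    using add lin_A2[OF lin_Pop] lin_A2[OF lin_Xop] by auto
  show ?case
    unfolding lin_add[OF lin_Pop add(1,2)] lin_add[OF lin_Xop add(1,2)]
      lin_add[OF lin_Xop pf(1,2)] lin_add[OF lin_Pop pf(3,4)] add(3,4)
    by (simp add: algebra_simps)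
qed

lemma Suc_choose': "Suc n choose k = (n choose k) + (if k = 0 then 0 else (n choose (k-1)))"
  by (cases k) simp_all

lemma chs: "(K - n) * (K choose n) = Suc n * (K choose Suc n)"
  using binomial_absorb_comp[of K n] times_binomial_minus1_eq[of "Suc n" K] by simp

lemma comb:
  fixes w :: "nat \<Rightarrow> nat \<Rightarrow> complex"
  shows "(\<Sum>n\<le>K. of_nat (K choose n) * (w (Suc (K-n)) n + w (K-n) (Suc n)
            + of_nat (K-n) * w (K-n-1) (Suc n) - of_nat n * w (K-n) n))
       = (\<Sum>n\<le>Suc K. of_nat (Suc K choose n) * w (Suc K - n) n)"
proof -
  have E: "(\<Sum>n\<le>K. of_nat (K choose n) * (of_nat (K-n) * w (K-n-1) (Suc n)))
         = (\<Sum>n\<le>K. of_nat (K choose n) * (of_nat n * w (K-n) n))"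
  proof (cases K)
    case 0 thus ?thesis by simp
  next
    case (Suc K')
    have "(\<Sum>n\<le>K. of_nat (K choose n) * (of_nat n * w (K-n) n))
        = (\<Sum>n\<le>K'. of_nat (K choose Suc n) * (of_nat (Suc n) * w (K - Suc n) (Suc n)))"
      unfolding Suc by (subst sum.atMost_Suc_shift) simp
    also have "\<dots> = (\<Sum>n\<le>K'. of_nat (K choose n) * (of_nat (K-n) * w (K-n-1) (Suc n)))"
    proof (rule sum.cong[OF refl])
      fix n
      have "of_nat (K choose Suc n) * of_nat (Suc n) = (of_nat (K choose n) * of_nat (K-n) :: complex)"
        using chs[of K n] by (metis (mono_tags) mult.commute of_nat_mult)
      thus "of_nat (K choose Suc n) * (of_nat (Suc n) * w (K - Suc n) (Suc n)) =
            (of_nat (K choose n) * (of_nat (K-n) * w (K-n-1) (Suc n)) :: complex)"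
        by (simp add: mult.assoc[symmetric])
    qed
    also have "\<dots> = (\<Sum>n\<le>K. of_nat (K choose n) * (of_nat (K-n) * w (K-n-1) (Suc n)))"
      unfolding Suc by (subst sum.atMost_Suc) simp
    finally show ?thesis by simp
  qed
  have R: "(\<Sum>n\<le>Suc K. of_nat (Suc K choose n) * w (Suc K - n) n)
      = (\<Sum>n\<le>K. of_nat (K choose n) * w (Suc (K-n)) n) + (\<Sum>n\<le>K. of_nat (K choose n) * w (K-n) (Suc n))"
  proof -
    have "(\<Sum>n\<le>Suc K. of_nat (Suc K choose n) * w (Suc K - n) n)
       = (\<Sum>n\<le>Suc K. of_nat (K choose n) * w (Suc K - n) n)
         + (\<Sum>n\<le>Suc K. (if n = 0 then 0 else of_nat (K choose (n-1))) * w (Suc K - n) n)"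
      by (subst sum.distrib[symmetric], rule sum.cong[OF refl]) (simp add: Suc_choose' distrib_right)
    also have "(\<Sum>n\<le>Suc K. of_nat (K choose n) * w (Suc K - n) n) = (\<Sum>n\<le>K. of_nat (K choose n) * w (Suc (K-n)) n)"
      by (subst sum.atMost_Suc) (auto intro!: sum.cong simp: Suc_diff_le)
    also have "(\<Sum>n\<le>Suc K. (if n = 0 then 0 else of_nat (K choose (n-1))) * w (Suc K - n) n)
        = (\<Sum>n\<le>K. of_nat (K choose n) * w (K-n) (Suc n))"
      by (subst sum.atMost_Suc_shift) simp
    finally show ?thesis .
  qed
  show ?thesis
    unfolding R using E
    by (simp add: distrib_left sum.distrib sum_subtractf algebra_simps)
qed

primrec ffo :: "((complex^2 \<Rightarrow> complex) \<Rightarrow> (complex^2 \<Rightarrow> complex)) \<Rightarrow> nat \<Rightarrow> (complex^2 \<Rightarrow> complex) \<Rightarrow> (complex^2 \<Rightarrow> complex)" where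
  "ffo T 0 g = g"
| "ffo T (Suc k) g = (\<lambda>z. T (ffo T k g) z - of_nat k * ffo T k g z)"

lemma ffo_A2: assumes "lin T" "g \<in> A2" shows "ffo T k g \<in> A2"
proof (induction k)
  case 0 thus ?case using assms by simp
next
  case (Suc k) thus ?case using A2_diff[OF lin_A2[OF assms(1) Suc.IH] Suc.IH] by simp
qed

lemma ffo_comm: "lin T \<Longrightarrow> g \<in> A2 \<Longrightarrow> ffo T k (\<lambda>z. T g z - c * g z) = (\<lambda>z. T (ffo T k g) z - c * ffo T k g z)"
proof (induction k)
  case 0 thus ?case by simp
next
  case (Suc k)
  have h: "ffo T k g \<in> A2" "T (ffo T k g) \<in> A2" using Suc ffo_A2 lin_A2 by blast+
  show ?case
    by (simp add: Suc.IH[OF Suc.prems] lin_diff[OF Suc.prems(1) h(2,1)] lin_diff[OF Suc.prems(1) h(1,1)]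
        lin_diff[OF Suc.prems(1) h(2,1)] algebra_simps)
qed

lemma lin_sum: assumes "lin T" "finite S" "\<forall>n\<in>S. h n \<in> A2"
  shows "T (\<lambda>z. \<Sum>n\<in>S. c n * h n z) = (\<lambda>z. \<Sum>n\<in>S. c n * T (h n) z) \<and> (\<lambda>z. \<Sum>n\<in>S. c n * h n z) \<in> A2"
  using assms(2,3)
proof (induction S rule: finite_induct)
  case empty thus ?case by (simp add: lin_zero[OF assms(1)] A2_zero)
next
  case (insert x F)
  have "T (\<lambda>z. c x * h x z + 1 * (\<Sum>n\<in>F. c n * h n z)) = (\<lambda>z. c x * T (h x) z + 1 * T (\<lambda>z. \<Sum>n\<in>F. c n * h n z) z)"
    using insert by (intro lin_lin[OF assms(1)]) auto
  moreover have "(\<lambda>z. c x * h x z + 1 * (\<Sum>n\<in>F. c n * h n z)) \<in> A2"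
    using insert by (intro A2_lin) auto
  ultimately show ?case using insert by simp
qed

lemma iter_p1_A2: "g \<in> A2 \<Longrightarrow> (partial 1 ^^ n) g \<in> A2"
  by (induction n) (auto intro: lin_A2[OF lin_partial1])

definition Xn :: "nat \<Rightarrow> (complex^2 \<Rightarrow> complex) \<Rightarrow> (complex^2 \<Rightarrow> complex)" where
  "Xn n g = (\<lambda>z. (z$0)^n * (partial 1 ^^ n) g z)"

lemma A2_mzn: "f \<in> A2 \<Longrightarrow> (\<lambda>z. (z$0)^n * f z) \<in> A2"
proof (induction n)
  case 0 thus ?case by simp
next
  case (Suc n)
  show ?case using A2_mz[OF Suc.IH[OF Suc.prems], of 1] by (simp add: mult.assoc)
qed

lemma Xn_A2: "g \<in> A2 \<Longrightarrow> Xn n g \<in> A2"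
  unfolding Xn_def by (intro A2_mzn iter_p1_A2)

lemma X_Xn: assumes "g \<in> A2" shows "Xop (Xn n g) = Xn (Suc n) g"
proof
  fix z :: "complex^2"
  let ?H = "(partial 1 ^^ n) g"
  have H: "?H \<in> A2" using assms by (rule iter_p1_A2)
  have "partial 1 (Xn n g) z = deriv (\<lambda>x. (z$0)^n * ?H (\<chi> k. if k = 1 then x else z$k)) (z$1)"
    by (simp only: partial_def[of 1 "Xn n g" z]) (simp add: Xn_def)
  also have "\<dots> = (z$0)^n * partial 1 ?H z"
    by (simp only: partial_def[of 1 ?H z] deriv_cmult[OF A2_slice_diff[OF H]])
  finally have "partial 1 (Xn n g) z = (z$0)^n * partial 1 ?H z" .
  thus "Xop (Xn n g) z = Xn (Suc n) g z"
    unfolding Xop_def by (simp add: Xn_def)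
qed

lemma X_ffP: assumes "y \<in> A2"
  shows "Xop (ffo Pop m y) = (\<lambda>z. ffo Pop m (Xop y) z + of_nat m * ffo Pop (m - 1) (Xop y) z)"
proof (induction m)
  case 0 thus ?case by simp
next
  case (Suc m)
  let ?h = "ffo Pop m y"
  let ?x = "Xop y"
  have h: "?h \<in> A2" "Pop ?h \<in> A2" using ffo_A2[OF lin_Pop assms] lin_A2[OF lin_Pop] by blast+
  have x: "?x \<in> A2" using lin_A2[OF lin_Xop assms] .
  have xm: "ffo Pop m ?x \<in> A2" "ffo Pop (m-1) ?x \<in> A2" using ffo_A2[OF lin_Pop x] by blast+
  have "Xop (ffo Pop (Suc m) y) = (\<lambda>z. Xop (Pop ?h) z - of_nat m * Xop ?h z)"
    by (simp add: lin_diff[OF lin_Xop h(2,1)])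
  also have "\<dots> = (\<lambda>z. Pop (Xop ?h) z + Xop ?h z - of_nat m * Xop ?h z)"
    by (simp add: XP_comm[OF h(1)])
  also have "\<dots> = (\<lambda>z. Pop (ffo Pop m ?x) z + of_nat m * Pop (ffo Pop (m-1) ?x) z
       + (1 - of_nat m) * (ffo Pop m ?x z + of_nat m * ffo Pop (m - 1) ?x z))"
  proof -
    have P2: "Pop (\<lambda>z. ffo Pop m ?x z + of_nat m * ffo Pop (m - 1) ?x z)
       = (\<lambda>z. Pop (ffo Pop m ?x) z + of_nat m * Pop (ffo Pop (m-1) ?x) z)"
      using lin_lin[OF lin_Pop xm(1,2), of 1 "of_nat m"] by simp
    show ?thesis unfolding Suc.IH P2 by (simp add: algebra_simps)
  qed
  also have "\<dots> = (\<lambda>z. ffo Pop (Suc m) ?x z + of_nat (Suc m) * ffo Pop (Suc m - 1) ?x z)"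
  proof (rule ext)
    fix z
    have s: "ffo Pop (Suc m) ?x z = Pop (ffo Pop m ?x) z - of_nat m * ffo Pop m ?x z" by (simp only: ffo.simps)
    show "Pop (ffo Pop m ?x) z + of_nat m * Pop (ffo Pop (m-1) ?x) z
       + (1 - of_nat m) * (ffo Pop m ?x z + of_nat m * ffo Pop (m - 1) ?x z) =
       ffo Pop (Suc m) ?x z + of_nat (Suc m) * ffo Pop (Suc m - 1) ?x z"
    proof (cases m)
      case 0 thus ?thesis by simp
    next
      case (Suc m')
      have e: "ffo Pop m ?x z = Pop (ffo Pop (m-1) ?x) z - of_nat (m-1) * ffo Pop (m-1) ?x z"
        using Suc by simp
      have o: "of_nat (m-1) = (of_nat m - 1 :: complex)" using Suc by simp
      show ?thesis unfolding s diff_Suc_1 e o by (simp add: algebra_simps)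
    qed
  qed
  finally show ?case .
qed

lemma Pop_ffo: "Pop (ffo Pop m y) = (\<lambda>z. ffo Pop (Suc m) y z + of_nat m * ffo Pop m y z)"
  by (rule ext) (simp only: ffo.simps, simp)

definition EK :: "nat \<Rightarrow> (complex^2 \<Rightarrow> complex) \<Rightarrow> (complex^2 \<Rightarrow> complex)" where
  "EK K g = (\<lambda>z. \<Sum>n\<le>K. of_nat (K choose n) * ffo Pop (K - n) (Xn n g) z)"

lemma ffD_EK: assumes "g \<in> A2" shows "ffo Dop K g = EK K g"
proof (induction K)
  case 0 show ?case by (simp add: EK_def Xn_def)
next
  case (Suc K)
  have mem: "\<forall>n\<in>{..K}. ffo Pop (K - n) (Xn n g) \<in> A2"
    using ffo_A2[OF lin_Pop Xn_A2[OF assms]] by blast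
  note ls = lin_sum[OF lin_Dop finite_atMost mem, of "\<lambda>n. of_nat (K choose n)"]
  have DE: "Dop (EK K g) = (\<lambda>z. \<Sum>n\<le>K. of_nat (K choose n) * Dop (ffo Pop (K - n) (Xn n g)) z)"
    unfolding EK_def using ls by blast
  have Dt: "Dop (ffo Pop m (Xn n g)) = (\<lambda>z. ffo Pop (Suc m) (Xn n g) z + of_nat m * ffo Pop m (Xn n g) z
        + (ffo Pop m (Xn (Suc n) g) z + of_nat m * ffo Pop (m - 1) (Xn (Suc n) g) z))" for m n
    unfolding Dop_def Pop_ffo X_ffP[OF Xn_A2[OF assms]] X_Xn[OF assms] by simp
  show ?case
  proof
    fix z
    let ?w = "\<lambda>m n. ffo Pop m (Xn n g) z"
    have "ffo Dop (Suc K) g z = Dop (EK K g) z - of_nat K * EK K g z"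
      by (simp add: Suc.IH)
    also have "\<dots> = (\<Sum>n\<le>K. of_nat (K choose n) * Dop (ffo Pop (K - n) (Xn n g)) z
                     - of_nat K * (of_nat (K choose n) * ffo Pop (K - n) (Xn n g) z))"
      unfolding DE by (simp add: EK_def sum_subtractf sum_distrib_left)
    also have "\<dots> = (\<Sum>n\<le>K. of_nat (K choose n) * (?w (Suc (K-n)) n + ?w (K-n) (Suc n)
            + of_nat (K-n) * ?w (K-n-1) (Suc n) - of_nat n * ?w (K-n) n))"
    proof (rule sum.cong[OF refl])
      fix n assume "n \<in> {..K}"
      hence kn: "of_nat (K - n) = (of_nat K - of_nat n :: complex)" by (simp add: of_nat_diff)
      show "of_nat (K choose n) * Dop (ffo Pop (K - n) (Xn n g)) z
                     - of_nat K * (of_nat (K choose n) * ffo Pop (K - n) (Xn n g) z) =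
            of_nat (K choose n) * (?w (Suc (K-n)) n + ?w (K-n) (Suc n)
            + of_nat (K-n) * ?w (K-n-1) (Suc n) - of_nat n * ?w (K-n) n)"
        unfolding Dt[of "K-n" n] kn by (simp add: algebra_simps)
    qed
    also have "\<dots> = EK (Suc K) g z"
      using comb[of K "\<lambda>m n. ffo Pop m (Xn n g) z"] by (simp add: EK_def)
    finally show "ffo Dop (Suc K) g z = EK (Suc K) g z" .
  qed
qed


definition Amap :: "complex \<Rightarrow> complex^2 \<Rightarrow> complex^2" where
  "Amap h z = (\<chi> i. if i = 0 then (1 / (1 + h)) * z$0 else z$1 + (1 - 1 / (1 + h)) * z$0)"

lemma Amap0: "Amap 0 z = z"
  unfolding Amap_def vec_eq_iff
proof
  fix i :: 2
  show "(\<chi> i. if i = 0 then (1 / (1 + 0)) * z$0 else z$1 + (1 - 1 / (1 + 0)) * z$0) $ i = z $ i"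
    using two_cases[of i] by auto
qed

lemma Amap_0[simp]: "Amap h z $ 0 = (1 / (1 + h)) * z$0" unfolding Amap_def by simp
lemma Amap_1[simp]: "Amap h z $ 1 = z$1 + (1 - 1 / (1 + h)) * z$0" unfolding Amap_def by simp

lemma ode_tm:
  assumes h: "1 + h \<noteq> 0"
  shows "((\<lambda>h. tm c a b u (Amap h z)) has_field_derivative Dop (tm c a b u) (Amap h z) / (1 + h)) (at h)"
proof -
  define p where "p = (\<lambda>h::complex. (1 / (1 + h)) * z$0)"
  define q where "q = (\<lambda>h::complex. z$1 + (1 - 1 / (1 + h)) * z$0)"
  have dp: "(p has_field_derivative (- (1 / (1 + h)) * p h)) (at h)"
    unfolding p_def using h
    by (auto intro!: derivative_eq_intros simp: field_simps power2_eq_square)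
  have dq: "(q has_field_derivative ((1 / (1 + h)) * p h)) (at h)"
    unfolding q_def p_def using h
    by (auto intro!: derivative_eq_intros simp: field_simps power2_eq_square)
  have f: "(\<lambda>h. tm c a b u (Amap h z)) = (\<lambda>h. c * p h ^ a * q h ^ b * exp (u$0 * p h + u$1 * q h))"
    by (simp add: tm_def bil_def p_def q_def)
  have "((\<lambda>h. c * p h ^ a * q h ^ b * exp (u$0 * p h + u$1 * q h)) has_field_derivative
     c * (of_nat a * p h ^ (a - 1) * (- (1 / (1 + h)) * p h)) * q h ^ b * exp (u$0 * p h + u$1 * q h)
     + c * p h ^ a * (of_nat b * q h ^ (b - 1) * ((1 / (1 + h)) * p h)) * exp (u$0 * p h + u$1 * q h)
     + c * p h ^ a * q h ^ b * (exp (u$0 * p h + u$1 * q h) * (u$0 * (- (1 / (1 + h)) * p h) + u$1 * ((1 / (1 + h)) * p h))))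
     (at h)"
    by (rule derivative_eq_intros dp dq refl | simp)+ (simp add: algebra_simps)
  moreover have "c * (of_nat a * p h ^ (a - 1) * (- (1 / (1 + h)) * p h)) * q h ^ b * exp (u$0 * p h + u$1 * q h)
     + c * p h ^ a * (of_nat b * q h ^ (b - 1) * ((1 / (1 + h)) * p h)) * exp (u$0 * p h + u$1 * q h)
     + c * p h ^ a * q h ^ b * (exp (u$0 * p h + u$1 * q h) * (u$0 * (- (1 / (1 + h)) * p h) + u$1 * ((1 / (1 + h)) * p h)))
     = Dop (tm c a b u) (Amap h z) / (1 + h)"
  proof -
    have D: "Dop (tm c a b u) (Amap h z) = - (c * of_nat a * p h ^ a * q h ^ b * exp (u$0 * p h + u$1 * q h))
        - c * u$0 * p h ^ Suc a * q h ^ b * exp (u$0 * p h + u$1 * q h)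
        + c * of_nat b * p h ^ Suc a * q h ^ (b - 1) * exp (u$0 * p h + u$1 * q h)
        + c * u$1 * p h ^ Suc a * q h ^ b * exp (u$0 * p h + u$1 * q h)"
      unfolding Dop_def Pop_tm Xop_tm by (simp add: tm_def bil_def p_def q_def)
    have "c * (of_nat a * p h ^ (a - 1) * (- (1 / (1 + h)) * p h)) * q h ^ b * exp (u$0 * p h + u$1 * q h)
     + c * p h ^ a * (of_nat b * q h ^ (b - 1) * ((1 / (1 + h)) * p h)) * exp (u$0 * p h + u$1 * q h)
     + c * p h ^ a * q h ^ b * (exp (u$0 * p h + u$1 * q h) * (u$0 * (- (1 / (1 + h)) * p h) + u$1 * ((1 / (1 + h)) * p h)))
     = (- (c * of_nat a * p h ^ a * q h ^ b * exp (u$0 * p h + u$1 * q h))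
        - c * u$0 * p h ^ Suc a * q h ^ b * exp (u$0 * p h + u$1 * q h)
        + c * of_nat b * p h ^ Suc a * q h ^ (b - 1) * exp (u$0 * p h + u$1 * q h)
        + c * u$1 * p h ^ Suc a * q h ^ b * exp (u$0 * p h + u$1 * q h)) / (1 + h)"
    proof (cases a)
      case 0 thus ?thesis by (simp add: divide_inverse algebra_simps)
    next
      case (Suc a') thus ?thesis by (simp add: divide_inverse algebra_simps)
    qed
    thus ?thesis unfolding D .
  qed
  ultimately show ?thesis unfolding f by simp
qed


lemma ode_A2:
  assumes "f \<in> A2" "1 + h \<noteq> 0"
  shows "((\<lambda>h. f (Amap h z)) has_field_derivative Dop f (Amap h z) / (1 + h)) (at h)"
  using assms(1)
proof (induction f rule: A2_induct)
  case zero thus ?case by (simp add: lin_zero[OF lin_Dop])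
next
  case (tm c a b u) thus ?case using ode_tm[OF assms(2)] by blast
next
  case (add f g)
  have "((\<lambda>h. f (Amap h z) + g (Amap h z)) has_field_derivative
      Dop f (Amap h z) / (1 + h) + Dop g (Amap h z) / (1 + h)) (at h)"
    using add by (intro DERIV_add)
  thus ?case by (simp add: lin_add[OF lin_Dop add(1,2)] add_divide_distrib)
qed

definition Sm :: "complex set" where "Sm = UNIV - {-1}"

lemma open_Sm: "open Sm" unfolding Sm_def by (intro open_Diff) auto
lemma Sm_iff: "h \<in> Sm \<longleftrightarrow> 1 + h \<noteq> 0"
  unfolding Sm_def by (auto simp: add_eq_0_iff)

lemma holo_A2: assumes "f \<in> A2" shows "(\<lambda>h. f (Amap h z)) holomorphic_on Sm"
  unfolding holomorphic_on_open[OF open_Sm]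
proof
  fix x assume "x \<in> Sm"
  thus "\<exists>f'. ((\<lambda>h. f (Amap h z)) has_field_derivative f') (at x)"
    using ode_A2[OF assms, of x z] by (auto simp: Sm_iff)
qed

lemma deriv_A2: "f \<in> A2 \<Longrightarrow> h \<in> Sm \<Longrightarrow> (1 + h) * deriv (\<lambda>h. f (Amap h z)) h = Dop f (Amap h z)"
  using DERIV_imp_deriv[OF ode_A2[of f h z]] by (simp add: Sm_iff)

lemma HD:
  assumes holo: "\<phi> holomorphic_on Sm" "\<psi> holomorphic_on Sm"
    and e: "\<And>h. h \<in> Sm \<Longrightarrow> (1 + h) * deriv \<phi> h = \<psi> h"
  shows "h \<in> Sm \<Longrightarrow> (1 + h) * (deriv ^^ Suc K) \<phi> h + of_nat K * (deriv ^^ K) \<phi> h = (deriv ^^ K) \<psi> h"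
proof (induction K arbitrary: h)
  case 0 thus ?case using e by simp
next
  case (Suc K)
  have ev: "eventually (\<lambda>x. (deriv ^^ K) \<psi> x = (1 + x) * (deriv ^^ Suc K) \<phi> x + of_nat K * (deriv ^^ K) \<phi> x) (nhds h)"
    using eventually_nhds_in_open[OF open_Sm Suc.prems] by (rule eventually_mono) (metis Suc.IH)
  have "(deriv ^^ Suc K) \<psi> h = deriv ((deriv ^^ K) \<psi>) h" by simp
  also have "\<dots> = deriv (\<lambda>x. (1 + x) * (deriv ^^ Suc K) \<phi> x + of_nat K * (deriv ^^ K) \<phi> x) h"
    by (rule deriv_cong_ev[OF ev refl])
  also have "\<dots> = 1 * (deriv ^^ Suc K) \<phi> h + (1 + h) * (deriv ^^ Suc (Suc K)) \<phi> h + of_nat K * (deriv ^^ Suc K) \<phi> h"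
  proof (rule DERIV_imp_deriv)
    have d1: "((deriv ^^ Suc K) \<phi> has_field_derivative (deriv ^^ Suc (Suc K)) \<phi> h) (at h)"
      by (rule has_field_derivative_higher_deriv[OF holo(1) open_Sm Suc.prems])
    have d0: "((deriv ^^ K) \<phi> has_field_derivative (deriv ^^ Suc K) \<phi> h) (at h)"
      by (rule has_field_derivative_higher_deriv[OF holo(1) open_Sm Suc.prems])
    show "((\<lambda>x. (1 + x) * (deriv ^^ Suc K) \<phi> x + of_nat K * (deriv ^^ K) \<phi> x) has_field_derivative
      1 * (deriv ^^ Suc K) \<phi> h + (1 + h) * (deriv ^^ Suc (Suc K)) \<phi> h + of_nat K * (deriv ^^ Suc K) \<phi> h) (at h)"
      by (rule derivative_eq_intros d1 d0 refl | simp)+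
  qed
  finally show ?case by (simp add: algebra_simps)
qed

lemma Hlem: "g \<in> A2 \<Longrightarrow> (deriv ^^ K) (\<lambda>h. g (Amap h z)) 0 = ffo Dop K g z"
proof (induction K arbitrary: g)
  case 0 thus ?case by (simp add: Amap0)
next
  case (Suc K)
  let ?\<phi> = "\<lambda>h. g (Amap h z)"
  let ?\<psi> = "\<lambda>h. Dop g (Amap h z)"
  have Dg: "Dop g \<in> A2" using lin_A2[OF lin_Dop Suc.prems] .
  have h1: "?\<phi> holomorphic_on Sm" "?\<psi> holomorphic_on Sm"
    using holo_A2[OF Suc.prems] holo_A2[OF Dg] by auto
  have z0: "0 \<in> Sm" by (simp add: Sm_iff)
  have "(deriv ^^ Suc K) ?\<phi> 0 = (deriv ^^ K) ?\<psi> 0 - of_nat K * (deriv ^^ K) ?\<phi> 0"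
    using HD[OF h1 deriv_A2[OF Suc.prems] z0, of K] by (simp add: algebra_simps)
  also have "\<dots> = (deriv ^^ K) (\<lambda>h. ?\<psi> h - of_nat K * ?\<phi> h) 0"
    by (subst higher_deriv_diff[OF h1(2) _ open_Sm z0])
       (auto intro!: holomorphic_intros h1 simp: higher_deriv_cmult[OF h1(1) z0 open_Sm])
  also have "\<dots> = ffo Dop K (\<lambda>w. Dop g w - of_nat K * g w) z"
    by (rule Suc.IH[OF A2_diff[OF Dg Suc.prems]])
  also have "\<dots> = ffo Dop (Suc K) g z"
    by (simp add: ffo_comm[OF lin_Dop Suc.prems])
  finally show ?case .
qed


lemma UNIV2: "(UNIV::2 set) = {0, 1}" using two_cases by auto
lemma sum2: "sum f (UNIV::2 set) = f 0 + f 1" unfolding UNIV2 by simp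

lemma ffo_zero: "lin T \<Longrightarrow> ffo T k (\<lambda>z. 0) = (\<lambda>z. 0)"
  by (induction k) (simp_all add: lin_zero)

lemma rho_psi0: "rho_psi 0 F = (\<lambda>N. Pop (F N))"
  by (simp add: rho_psi_def Pop_def)

lemma ffact_rho: "ffact_op (rho_psi 0) m F = (\<lambda>N. ffo Pop m (F N))"
  by (induction m) (simp_all add: rho_psi0)

lemma rho_b_pow: "(rho_b 1 ^^ n) F = (\<lambda>N. (partial 1 ^^ n) (F N))"
  by (induction n) (simp_all add: rho_b_def)

lemma am1_pow: "(am1 1 ^^ m) F = (\<lambda>N z. if N < m then 0 else F (N - m) z)"
proof (induction m)
  case 0 thus ?case by simp
next
  case (Suc m) thus ?case
    by (auto simp: am1_def rho_a_def fun_eq_iff)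
qed

lemma phi_pow: "(rho_phi 0 ^^ n) H = (\<lambda>N z. if N < n then 0 else (z$0)^n * H (N - n) z)"
proof (induction n)
  case 0 thus ?case by simp
next
  case (Suc n) thus ?case
    by (auto simp: rho_phi_def fun_eq_iff)
qed

lemma R_term_eq: "R_term m n F N = (if N < m + n then (\<lambda>z. 0)
   else (\<lambda>z. ffo Pop m (Xn n (F (N - m - n))) z / (fact m * fact n)))"
proof -
  have inner: "(rho_phi 0 ^^ n) ((am1 1 ^^ m) ((rho_b 1 ^^ n) F)) N =
      (if N < m + n then (\<lambda>z. 0) else Xn n (F (N - m - n)))"
    unfolding phi_pow am1_pow rho_b_pow Xn_def by (auto simp: fun_eq_iff diff_diff_add add.commute)
  show ?thesis
    unfolding R_term_def binom_op_def ffact_rho inner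
    by (auto simp: ffo_zero[OF lin_Pop])
qed

lemma R_term_A2: assumes "F \<in> A2ser" shows "R_term m n F N \<in> A2"
proof (cases "N < m + n")
  case True thus ?thesis by (simp add: R_term_eq A2_zero)
next
  case False
  have "F (N - m - n) \<in> A2" using assms unfolding A2ser_def by blast
  hence "ffo Pop m (Xn n (F (N - m - n))) \<in> A2" by (intro ffo_A2[OF lin_Pop] Xn_A2)
  from A2_cmult[OF this, of "1 / (fact m * fact n)"] show ?thesis
    using False by (simp add: R_term_eq)
qed

lemma swap_A2: assumes "f \<in> A2" shows "(\<lambda>w. f (\<chi> i. if i = 0 then w$1 else w$0)) \<in> A2"
  using assms
proof (induction f rule: A2_induct)
  case zero thus ?case using A2_zero by simp
next
  case (tm c a b u)
  have "(\<lambda>w. tm c a b u (\<chi> i. if i = 0 then w$1 else w$0)) = tm c b a (\<chi> i. if i = 0 then u$1 else u$0)"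
    by (auto simp: tm_def bil_def fun_eq_iff algebra_simps)
  thus ?case using A2_tm by simp
next
  case (add f g) thus ?case using A2_add by simp
qed

lemma swapP_A2ser: "F \<in> A2ser \<Longrightarrow> swapP F \<in> A2ser"
  unfolding A2ser_def swapP_def using swap_A2 by auto

lemma U_Amap: "transpose (Umat h) *v z = (\<chi> i. if i = 0 then Amap h z $ 1 else Amap h z $ 0)"
  unfolding vec_eq_iff
proof
  fix i :: 2
  show "(transpose (Umat h) *v z) $ i = (\<chi> i. if i = 0 then Amap h z $ 1 else Amap h z $ 0) $ i"
    using two_cases[of i]
    by (auto simp: matrix_vector_mult_def transpose_def Umat_def Let_def sum2 algebra_simps)
qed

lemma bil_transpose: "bil v (transpose A *v z) = bil (A *v v) z"
  by (simp add: bil_def matrix_vector_mult_def transpose_def sum2 algebra_simps)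

lemma hcoeff_G: assumes "F \<in> A2ser"
  shows "hcoeff (\<lambda>h. F j (transpose (Umat h) *v z)) K = ffo Dop K (swapP F j) z / fact K"
proof -
  have "(\<lambda>h. F j (transpose (Umat h) *v z)) = (\<lambda>h. swapP F j (Amap h z))"
    by (simp only: swapP_def U_Amap)
  moreover have "swapP F j \<in> A2" using swapP_A2ser[OF assms] unfolding A2ser_def by blast
  ultimately show ?thesis unfolding hcoeff_def using Hlem by simp
qed

lemma EK_fact: "EK K g z / fact K = (\<Sum>n\<le>K. ffo Pop (K - n) (Xn n g) z / (fact (K - n) * fact n))"
  unfolding EK_def sum_divide_distrib
proof (rule sum.cong[OF refl])
  fix n assume "n \<in> {..K}"
  hence "of_nat (K choose n) = (fact K / (fact n * fact (K - n)) :: complex)"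
    by (intro binomial_fact) simp
  thus "of_nat (K choose n) * ffo Pop (K - n) (Xn n g) z / fact K = ffo Pop (K - n) (Xn n g) z / (fact (K - n) * fact n)"
    by (simp add: field_simps)
qed

lemma r_op_eq: assumes "F \<in> A2ser"
  shows "r_op F N z = (\<Sum>j\<le>N. \<Sum>n\<le>N - j. ffo Pop (N - j - n) (Xn n (swapP F j)) z / (fact (N - j - n) * fact n))"
proof -
  let ?G = "swapP F"
  let ?f = "\<lambda>p. R_term (fst p) (snd p) ?G N z"
  define T where "T = {p :: nat \<times> nat. fst p + snd p \<le> N}"
  have finT: "finite T"
    by (rule finite_subset[of _ "{..N} \<times> {..N}"]) (auto simp: T_def)
  have "r_op F N z = infsum ?f UNIV" unfolding r_op_def rho2R_def by simp
  also have "\<dots> = infsum ?f T"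
    by (rule infsum_cong_neutral) (auto simp: T_def R_term_eq)
  also have "\<dots> = sum ?f T" using finT by simp
  also have "\<dots> = (\<Sum>p\<in>T. ffo Pop (fst p) (Xn (snd p) (?G (N - fst p - snd p))) z / (fact (fst p) * fact (snd p)))"
    by (rule sum.cong[OF refl]) (auto simp: T_def R_term_eq)
  also have "\<dots> = (\<Sum>q\<in>Sigma {..N} (\<lambda>j. {..N - j}). ffo Pop (N - fst q - snd q) (Xn (snd q) (?G (fst q))) z / (fact (N - fst q - snd q) * fact (snd q)))"
    by (rule sum.reindex_bij_witness[where i = "\<lambda>p. (N - fst p - snd p, snd p)" and j = "\<lambda>p. (N - fst p - snd p, snd p)"])
       (auto simp: T_def)
  also have "\<dots> = (\<Sum>j\<le>N. \<Sum>n\<le>N - j. ffo Pop (N - j - n) (Xn n (swapP F j)) z / (fact (N - j - n) * fact n))"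
    by (subst sum.Sigma) (auto simp: split_beta)
  finally show ?thesis .
qed

lemma main2: assumes "F \<in> A2ser" shows "r_op F = substU F"
proof (intro ext)
  fix N z
  have G: "swapP F j \<in> A2" for j using swapP_A2ser[OF assms] unfolding A2ser_def by blast
  show "r_op F N z = substU F N z"
    unfolding r_op_eq[OF assms] substU_def
  proof (rule sum.cong[OF refl])
    fix j assume "j \<in> {..N}"
    show "(\<Sum>n\<le>N - j. ffo Pop (N - j - n) (Xn n (swapP F j)) z / (fact (N - j - n) * fact n)) =
          hcoeff (\<lambda>h. F j (transpose (Umat h) *v z)) (N - j)"
      unfolding hcoeff_G[OF assms] ffD_EK[OF G] EK_fact by simp
  qed
qed

lemma coh_tm: "coh v = tm 1 0 0 v" by (simp add: coh_def tm_def fun_eq_iff)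

lemma higher_deriv_zero: "(deriv ^^ k) (\<lambda>h. 0::complex) = (\<lambda>h. 0)"
  by (induction k) (simp_all add: fun_eq_iff)

theorem mainTheorem6:
  fixes F :: hser and v :: "complex^2"
  assumes "F \<in> A2ser"
  shows "(\<forall>m n N. (N < m + n \<longrightarrow> R_term m n F N = (\<lambda>z. 0)) \<and> R_term m n F N \<in> A2)
       \<and> r_op F = substU F
       \<and> r_op (\<lambda>N. if N = 0 then coh v else (\<lambda>z. 0)) = cohU v"
proof (intro conjI allI impI)
  fix m n N
  show "N < m + n \<Longrightarrow> R_term m n F N = (\<lambda>z. 0)" by (simp add: R_term_eq)
  show "R_term m n F N \<in> A2" using R_term_A2[OF assms] .
next
  show "r_op F = substU F" using main2[OF assms] .
next
  let ?F = "\<lambda>N. if N = 0 then coh v else (\<lambda>z. 0)"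
  have F: "?F \<in> A2ser" unfolding A2ser_def coh_tm using A2_tm A2_zero by auto
  show "r_op ?F = cohU v"
  proof (intro ext)
    fix N z
    have "r_op ?F N z = substU ?F N z" using main2[OF F] by simp
    also have "\<dots> = (\<Sum>j\<le>N. if j = 0 then hcoeff (\<lambda>h. coh v (transpose (Umat h) *v z)) N else 0)"
      unfolding substU_def
      by (rule sum.cong[OF refl]) (simp add: hcoeff_def higher_deriv_zero)
    also have "\<dots> = hcoeff (\<lambda>h. coh v (transpose (Umat h) *v z)) N"
      by (simp add: sum.delta)
    also have "\<dots> = cohU v N z"
      unfolding cohU_def coh_def bil_transpose ..
    finally show "r_op ?F N z = cohU v N z" .
  qed
qed

end
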